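(* Let $(\tau,\{\mathbf R_s\}_{s\in\mathcal S})$ be a feasible TWAVRP solution. Then there exist arrival-time vectors $\bm a_s\in\mathcal X(\mathbf R_s,[e,\ell];\theta_s)$, $s\in\mathcal S$, such that (i) for every $i\in V_{\mathrm{cont}}$ and every $\beta\in\mathbb R$: either $a_{si}\le \beta+w_i/2$ for all $s\in\mathcal S$, or $a_{si}\ge \beta-w_i/2$ for all $s\in\mathcal S$; and (ii) for every $i\in V_{\mathrm{disc}}$ and every $b\in\{1,\dots,N_i-1\}$: either $a_{si}\le \bar y_{ib}$ for all $s\in\mathcal S$, or $a_{si}\ge \underline y_{i,b+1}$ for all $s\in\mathcal S$.
   Context: Let $G=(V,A)$ be a directed graph with $V=\{0,1,\dots,n\}$; node $0$ is the depot and $V_C=V\setminus\{0\}$ is the set of customers. The depot has operating window $[e_0,\ell_0]$, vehicles have capacity $Q$, and each customer $i\in V_C$ has an exogenous time window $[e_i,\ell_i]$. A vector of operational parameters $\theta$ consists of arc costs $c_{ij}\ge 0$ and arc travel times $t_{ij}\ge0$ for $(i,j)\in A$, and demands $q_i\ge 0$ and service times $u_i\ge 0$ for $i\in V_C$. The customer set is partitioned as $V_C=V_{\mathrm{cont}}\cup V_{\mathrm{disc}}$ (disjoint). For $i\in V_{\mathrm{cont}}$ a width $w_i\ge0$ with $e_i\le \ell_i-w_i$ is given and $TW_i=\{[y,y+w_i]: e_i\le y\le \ell_i-w_i\}$. For $i\in V_{\mathrm{disc}}$, $TW_i=\{[\underline y_{i1},\bar y_{i1}],\dots,[\underline y_{iN_i},\bar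 y_{iN_i}]\}$ is a finite set of intervals with $\underline y_{ib}\le\bar y_{ib}$, none contained in another, ordered so that $e_i=\underline y_{i1}<\dots<\underline y_{iN_i}$ and $\bar y_{i1}<\dots<\bar y_{iN_i}=\ell_i$. A route set $\mathbf R=(R_1,\dots,R_m)$ is a collection of pairwise disjoint nonempty sequences $R_k=(R_{k,1},\dots,R_{k,n_k})$ of distinct customers (every customer with positive demand appearing in exactly one sequence). For a vector $\tau=(\tau_1,\dots,\tau_n)$ of closed intervals, $\mathcal X(\mathbf R,\tau;\theta)$ is the set of $\bm a\in\mathbb R^n_{\ge0}$ with: $a_{R_{k,1}}\ge e_0+t_{0,R_{k,1}}$ for all $k$; $a_{R_{k,l+1}}-a_{R_{k,l}}\ge t_{R_{k,l},R_{k,l+1}}+u_{R_{k,l}}$ for all $k$ and $1\le l\le n_k-1$; $a_{R_{k,n_k}}\le \ell_0-t_{R_{k,n_k},0}-u_{R_{k,n_k}}$ for all $k$; and $a_i\in\tau_i$ for all $i\in V_C$. We write $\mathbf R\in\mathcal R(\tau;\theta)$ if $\sum_{i\in R_k}q_i\le Q$ for every $k$ and $\mathcal X(\mathbf R,\tau;\theta)\neq\emptyset$. Finitely many scenarios $\theta_1,\dots,\theta_S$ are given, $\mathcal S=\{1,\dots,S\}$. A feasible TWAVRP solution is a pair $(\tau,\{\mathbf R_s\}_{s\in\mathcal S})$ with $\tau_i\in TW_i$ for all $i\in V_C$ and $\mathbf R_s\in\mathcal R(\tau;\theta_s)$ for all $s$. $[e,\ell]$ denotes the vector $([e_1,\ell_1],\dots,[e_n,\ell_n])$,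 and $a_{si}$ denotes the $i$-th component of $\bm a_s$. *)

theory Defs
  imports Complex_Main
begin

text \<open>Operational parameters theta: arc costs c, arc travel times t (indexed by
  node pairs, node 0 = depot), customer demands q and service times u.\<close>
record theta =
  cost :: "nat \<Rightarrow> nat \<Rightarrow> real"
  ttime :: "nat \<Rightarrow> nat \<Rightarrow> real"
  dem :: "nat \<Rightarrow> real"
  serv :: "nat \<Rightarrow> real"

definition ival :: "real \<times> real \<Rightarrow> real set" where
  "ival p = {fst p .. snd p}"

definition route_set :: "nat \<Rightarrow> (nat \<Rightarrow> real) \<Rightarrow> nat list list \<Rightarrow> bool" where
  "route_set n q Rs \<longleftrightarrow>
     (\<forall>k < length Rs. Rs ! k \<noteq> [] \<and> distinct (Rs ! k) \<and> set (Rs ! k) \<subseteq> {1..n}) \<and>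
     (\<forall>k < length Rs. \<forall>k' < length Rs. k \<noteq> k' \<longrightarrow> set (Rs ! k) \<inter> set (Rs ! k') = {}) \<and>
     (\<forall>i \<in> {1..n}. q i > 0 \<longrightarrow> (\<exists>k < length Rs. i \<in> set (Rs ! k)))"

definition arrX :: "nat \<Rightarrow> real \<Rightarrow> real \<Rightarrow> nat list list \<Rightarrow> (nat \<Rightarrow> real \<times> real)
                    \<Rightarrow> theta \<Rightarrow> (nat \<Rightarrow> real) set" where
  "arrX n e0 l0 Rs \<tau> th = {a.
     (\<forall>i \<in> {1..n}. a i \<ge> 0) \<and>
     (\<forall>k < length Rs. a (hd (Rs ! k)) \<ge> e0 + ttime th 0 (hd (Rs ! k))) \<and>
     (\<forall>k < length Rs. \<forall>l. 1 \<le> l \<and> l \<le> length (Rs ! k) - 1 \<longrightarrow>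
         a (Rs ! k ! l) - a (Rs ! k ! (l - 1))
           \<ge> ttime th (Rs ! k ! (l - 1)) (Rs ! k ! l) + serv th (Rs ! k ! (l - 1))) \<and>
     (\<forall>k < length Rs. a (last (Rs ! k)) \<le> l0 - ttime th (last (Rs ! k)) 0 - serv th (last (Rs ! k))) \<and>
     (\<forall>i \<in> {1..n}. a i \<in> ival (\<tau> i))}"

definition feasible_routes :: "nat \<Rightarrow> real \<Rightarrow> real \<Rightarrow> real \<Rightarrow> (nat \<Rightarrow> real \<times> real)
                               \<Rightarrow> theta \<Rightarrow> nat list list \<Rightarrow> bool" where
  "feasible_routes n e0 l0 Q \<tau> th Rs \<longleftrightarrow>
     route_set n (dem th) Rs \<and>
     (\<forall>k < length Rs. (\<Sum>i \<in> set (Rs ! k). dem th i) \<le> Q) \<and>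
     arrX n e0 l0 Rs \<tau> th \<noteq> {}"

definition TW_cont :: "real \<Rightarrow> real \<Rightarrow> real \<Rightarrow> (real \<times> real) set" where
  "TW_cont e l w = {(y, y + w) | y. e \<le> y \<and> y \<le> l - w}"

definition TW_disc :: "nat \<Rightarrow> (nat \<Rightarrow> real) \<Rightarrow> (nat \<Rightarrow> real) \<Rightarrow> (real \<times> real) set" where
  "TW_disc N ylo yhi = {(ylo b, yhi b) | b. b \<in> {1..N}}"

end

theory Submission
  imports Defs
begin

lemma mono_chain:
  fixes f :: "nat \<Rightarrow> real"
  assumes "\<forall>b \<in> {1..<N}. f b < f (b + 1)" "1 \<le> b" "b \<le> b'" "b' \<le> N"
  shows "f b \<le> f b'"
  using assms(3,4)
proof (induction b' rule: dec_induct)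
  case base then show ?case by simp
next
  case (step m)
  then have "f m < f (m+1)" using assms(1,2) by auto
  with step show ?case by simp
qed

theorem mainTheorem1:
  fixes n S :: nat
    and e0 l0 Q :: real
    and e l :: "nat \<Rightarrow> real"
    and \<Theta> :: "nat \<Rightarrow> theta"
    and Vcont Vdisc :: "nat set"
    and w :: "nat \<Rightarrow> real"
    and N :: "nat \<Rightarrow> nat"
    and ylo yhi :: "nat \<Rightarrow> nat \<Rightarrow> real"
    and \<tau> :: "nat \<Rightarrow> real \<times> real"
    and Rsol :: "nat \<Rightarrow> nat list list"
  assumes params_nonneg: "\<forall>s \<in> {1..S}.
        (\<forall>i j. cost (\<Theta> s) i j \<ge> 0 \<and> ttime (\<Theta> s) i j \<ge> 0) \<and>
        (\<forall>i \<in> {1..n}. dem (\<Theta> s) i \<ge> 0 \<and> serv (\<Theta> s) i \<ge> 0)"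
    and partition: "Vcont \<union> Vdisc = {1..n}" "Vcont \<inter> Vdisc = {}"
    and cont_w: "\<forall>i \<in> Vcont. w i \<ge> 0 \<and> e i \<le> l i - w i"
    and disc_N: "\<forall>i \<in> Vdisc. N i \<ge> 1"
    and disc_le: "\<forall>i \<in> Vdisc. \<forall>b \<in> {1..N i}. ylo i b \<le> yhi i b"
    and disc_nocontain: "\<forall>i \<in> Vdisc. \<forall>b \<in> {1..N i}. \<forall>b' \<in> {1..N i}. b \<noteq> b' \<longrightarrow>
            \<not> ({ylo i b .. yhi i b} \<subseteq> {ylo i b' .. yhi i b'})"
    and disc_lo_mono: "\<forall>i \<in> Vdisc. \<forall>b \<in> {1..<N i}. ylo i b < ylo i (b + 1)"
    and disc_hi_mono: "\<forall>i \<in> Vdisc. \<forall>b \<in> {1..<N i}. yhi i b < yhi i (b + 1)"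
    and disc_ends: "\<forall>i \<in> Vdisc. ylo i 1 = e i \<and> yhi i (N i) = l i"
    and tw_cont: "\<forall>i \<in> Vcont. \<tau> i \<in> TW_cont (e i) (l i) (w i)"
    and tw_disc: "\<forall>i \<in> Vdisc. \<tau> i \<in> TW_disc (N i) (ylo i) (yhi i)"
    and routes: "\<forall>s \<in> {1..S}. feasible_routes n e0 l0 Q \<tau> (\<Theta> s) (Rsol s)"
  shows "\<exists>a :: nat \<Rightarrow> nat \<Rightarrow> real.
     (\<forall>s \<in> {1..S}. a s \<in> arrX n e0 l0 (Rsol s) (\<lambda>i. (e i, l i)) (\<Theta> s)) \<and>
     (\<forall>i \<in> Vcont. \<forall>\<beta> :: real.
        (\<forall>s \<in> {1..S}. a s i \<le> \<beta> + w i / 2) \<or> (\<forall>s \<in> {1..S}. a s i \<ge> \<beta> - w i / 2)) \<and>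
     (\<forall>i \<in> Vdisc. \<forall>b \<in> {1..<N i}.
        (\<forall>s \<in> {1..S}. a s i \<le> yhi i b) \<or> (\<forall>s \<in> {1..S}. a s i \<ge> ylo i (b + 1)))"
proof -
  define a where "a = (\<lambda>s. SOME x. x \<in> arrX n e0 l0 (Rsol s) \<tau> (\<Theta> s))"
  have aX: "a s \<in> arrX n e0 l0 (Rsol s) \<tau> (\<Theta> s)" if "s \<in> {1..S}" for s
    using routes that unfolding a_def feasible_routes_def by (metis some_in_eq)
  have aT: "a s i \<in> ival (\<tau> i)" if "s \<in> {1..S}" "i \<in> {1..n}" for s i
    using aX[OF that(1)] that(2) unfolding arrX_def by blast
  have sub: "ival (\<tau> i) \<subseteq> {e i .. l i}" if "i \<in> {1..n}" for i
  proof (cases "i \<in> Vcont")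
    case True
    then show ?thesis using tw_cont cont_w unfolding TW_cont_def ival_def by fastforce
  next
    case False
    then have iD: "i \<in> Vdisc" using partition that by auto
    then obtain b where b: "b \<in> {1..N i}" "\<tau> i = (ylo i b, yhi i b)"
      using tw_disc unfolding TW_disc_def by blast
    have "ylo i 1 \<le> ylo i b" using mono_chain[of "N i" "ylo i" 1 b] disc_lo_mono iD b by auto
    moreover have "yhi i b \<le> yhi i (N i)"
      using mono_chain[of "N i" "yhi i" b "N i"] disc_hi_mono iD b by auto
    ultimately show ?thesis using b disc_ends iD unfolding ival_def by auto
  qed
  have P1: "\<forall>s \<in> {1..S}. a s \<in> arrX n e0 l0 (Rsol s) (\<lambda>i. (e i, l i)) (\<Theta> s)"
  proof
    fix s assume s: "s \<in> {1..S}"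
    show "a s \<in> arrX n e0 l0 (Rsol s) (\<lambda>i. (e i, l i)) (\<Theta> s)"
      using aX[OF s] sub unfolding arrX_def ival_def by (auto simp: subset_iff)
  qed
  have P2: "\<forall>i \<in> Vcont. \<forall>\<beta> :: real.
        (\<forall>s \<in> {1..S}. a s i \<le> \<beta> + w i / 2) \<or> (\<forall>s \<in> {1..S}. a s i \<ge> \<beta> - w i / 2)"
  proof (intro ballI allI)
    fix i \<beta> assume i: "i \<in> Vcont"
    then obtain y where y: "\<tau> i = (y, y + w i)" using tw_cont unfolding TW_cont_def by blast
    have iN: "i \<in> {1..n}" using i partition by auto
    have "a s i \<in> {y .. y + w i}" if "s \<in> {1..S}" for s
      using aT[OF that iN] y unfolding ival_def by simp
    then show "(\<forall>s \<in> {1..S}. a s i \<le> \<beta> + w i / 2) \<or> (\<forall>s \<in> {1..S}. a s i \<ge> \<beta> - w i / 2)"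
      by (cases "\<beta> \<ge> y + w i / 2") force+
  qed
  have P3: "\<forall>i \<in> Vdisc. \<forall>b \<in> {1..<N i}.
        (\<forall>s \<in> {1..S}. a s i \<le> yhi i b) \<or> (\<forall>s \<in> {1..S}. a s i \<ge> ylo i (b + 1))"
  proof (intro ballI)
    fix i b assume i: "i \<in> Vdisc" and b: "b \<in> {1..<N i}"
    then obtain b0 where b0: "b0 \<in> {1..N i}" "\<tau> i = (ylo i b0, yhi i b0)"
      using tw_disc unfolding TW_disc_def by blast
    have iN: "i \<in> {1..n}" using i partition by auto
    have A: "a s i \<in> {ylo i b0 .. yhi i b0}" if "s \<in> {1..S}" for s
      using aT[OF that iN] b0 unfolding ival_def by simp
    show "(\<forall>s \<in> {1..S}. a s i \<le> yhi i b) \<or> (\<forall>s \<in> {1..S}. a s i \<ge> ylo i (b + 1))"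
    proof (cases "b0 \<le> b")
      case True
      have "yhi i b0 \<le> yhi i b"
        using mono_chain[of "N i" "yhi i" b0 b] disc_hi_mono i b b0 True by auto
      then show ?thesis using A by force
    next
      case False
      have "ylo i (b+1) \<le> ylo i b0"
        using mono_chain[of "N i" "ylo i" "b+1" b0] disc_lo_mono i b b0 False by auto
      then show ?thesis using A by force
    qed
  qed
  show ?thesis using P1 P2 P3 by blast
qed

end
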